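(* Let $\pi\in\mathfrak{S}_n$ have disjoint cycles of lengths $\ell_1,\dots,\ell_m$ (fixed points included). In $\textsf{Star}(n)$, the number of elements covered by $\pi$ is $\sum_{1\le i<j\le m}\ell_i\ell_j$, and the number of elements covering $\pi$ is $\sum_{i=1}^m\binom{\ell_i}{2}$.
   Context: $\mathfrak{S}_n$ is the symmetric group on $[n]$, products taken right to left. For a pivot $k\in[n]$, a star factorization of $\pi$ is $\pi=g_1\cdots g_r$ with each $g_i$ a transposition $(k\ i)$, $i\neq k$; it is transitive if all $(k\ i)$, $i\in[n]\setminus\{k\}$, occur; $\star_k(\pi)$ is the set of transitive star factorizations of $\pi$ of minimum length $n+m-2$ ($m$ = number of cycles of $\pi$). $\sigma\preceq_k\pi$ means some $\gamma\in\star_k(\sigma)$ is a not necessarily contiguous subword of some $\delta\in\star_k(\pi)$. This relation does not depend on $k$; it is denoted $\preceq$, and $\textsf{Star}(n)$ is the resulting poset on $\mathfrak{S}_n$. $\tau$ covers $\sigma$ if $\sigma\preceq\tau$, $\sigma\neq\tau$, and there is no $\rho\notin\{\sigma,\tau\}$ with $\sigma\preceq\rho\preceq\tau$. *)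

theory Defs
  imports "HOL-Combinatorics.Combinatorics" "HOL-Library.Sublist" "HOL-Library.Multiset"
begin

(* Permutations of [n] = {1..n} are functions nat => nat with  p permutes {1..n}.
   Products are function composition (right to left): (g1 o g2) x = g1 (g2 x). *)

(* product g_1 ... g_r of the star transpositions (k i_1) ... (k i_r) encoded by the word [i_1,...,i_r] *)
definition star_prod :: "nat \<Rightarrow> nat list \<Rightarrow> (nat \<Rightarrow> nat)" where
  "star_prod k w = foldr (\<lambda>i f. transpose k i \<circ> f) w id"

definition cycles_of :: "nat \<Rightarrow> (nat \<Rightarrow> nat) \<Rightarrow> nat set set" where
  "cycles_of n p = (\<lambda>x. {(p ^^ j) x | j. True}) ` {1..n}"

definition num_cycles :: "nat \<Rightarrow> (nat \<Rightarrow> nat) \<Rightarrow> nat" where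
  "num_cycles n p = card (cycles_of n p)"

(* star_k(p): transitive star factorizations of p with pivot k of minimum length n + m - 2 *)
definition star_facts :: "nat \<Rightarrow> nat \<Rightarrow> (nat \<Rightarrow> nat) \<Rightarrow> nat list set" where
  "star_facts n k p = {w. star_prod k w = p
                          \<and> set w = {1..n} - {k}
                          \<and> length w = n + num_cycles n p - 2}"

definition star_le :: "nat \<Rightarrow> nat \<Rightarrow> (nat \<Rightarrow> nat) \<Rightarrow> (nat \<Rightarrow> nat) \<Rightarrow> bool" where
  "star_le n k \<sigma> \<pi> \<longleftrightarrow> (\<exists>\<gamma>\<in>star_facts n k \<sigma>. \<exists>\<delta>\<in>star_facts n k \<pi>. subseq \<gamma> \<delta>)"

definition star_covers :: "nat \<Rightarrow> nat \<Rightarrow> (nat \<Rightarrow> nat) \<Rightarrow> (nat \<Rightarrow> nat) \<Rightarrow> bool" where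
  "star_covers n k \<sigma> \<tau> \<longleftrightarrow>
     \<sigma> permutes {1..n} \<and> \<tau> permutes {1..n} \<and> star_le n k \<sigma> \<tau> \<and> \<sigma> \<noteq> \<tau> \<and>
     \<not> (\<exists>\<rho>. \<rho> permutes {1..n} \<and> \<rho> \<notin> {\<sigma>, \<tau>} \<and> star_le n k \<sigma> \<rho> \<and> star_le n k \<rho> \<tau>)"

end

theory Submission
  imports Defs
begin


lemma star_prod_Nil[simp]: "star_prod k [] = id"
  by (simp add: star_prod_def)
lemma star_prod_Cons[simp]: "star_prod k (i # w) = transpose k i \<circ> star_prod k w"
  by (simp add: star_prod_def)
lemma star_prod_append: "star_prod k (u @ v) = star_prod k u \<circ> star_prod k v"
  by (induction u) (auto simp: comp_assoc)
lemma star_prod_snoc: "star_prod k (w @ [i]) = star_prod k w \<circ> transpose k i"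
  by (simp add: star_prod_append)

lemma star_prod_permutes:
  assumes "k \<in> S" "set w \<subseteq> S" shows "star_prod k w permutes S"
  using assms(2)
proof (induction w)
  case Nil then show ?case by (simp only: star_prod_Nil permutes_id)
next
  case (Cons i w)
  then have "star_prod k w permutes S" "transpose k i permutes S"
    using assms(1) by (auto intro: permutes_swap_id)
  from permutes_compose[OF this] show ?case by (simp only: star_prod_Cons)
qed

lemma star_prod_fix:
  assumes "x \<notin> insert k (set w)" shows "star_prod k w x = x"
  using assms by (induction w) auto

lemma cycles_of_orbit:
  assumes "p permutes {1..n}"
  shows "cycles_of n p = orbit p ` {1..n}"
proof -
  have "permutation p" using assms by (auto simp: permutation_permutes)
  then show ?thesis unfolding cycles_of_def by (simp add: orbit_altdef_permutation)
qed

lemma orbit_eq_of_mem: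
  assumes "permutation p" "y \<in> orbit p x" shows "orbit p y = orbit p x"
proof
  show "orbit p y \<subseteq> orbit p x" using assms(2) orbit_trans by fast
  have "x \<in> orbit p y" using orbit_swap[OF permutation_self_in_orbit[OF assms(1)] assms(2)] .
  then show "orbit p x \<subseteq> orbit p y" using orbit_trans by fast
qed

lemma orbit_sym:
  assumes "permutation p" "y \<in> orbit p x" shows "x \<in> orbit p y"
  using orbit_eq_of_mem[OF assms] permutation_self_in_orbit[OF assms(1)] by blast

lemma orbit_subset_S:
  assumes "p permutes S" "x \<in> S" shows "orbit p x \<subseteq> S"
proof -
  have "permutation p \<or> True" by simp
  show ?thesis
  proof
    fix y assume "y \<in> orbit p x"
    then show "y \<in> S" by induction (use assms in \<open>auto simp: permutes_in_image\<close>)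
  qed
qed

lemma funpow_in_orbit_perm:
  assumes "permutation p" shows "(p ^^ j) x \<in> orbit p x"
  using assms by (auto simp: orbit_altdef_permutation)

lemma split_orbits:
  fixes p :: "'a \<Rightarrow> 'a"
  assumes perm: "permutation p" and ab: "a \<noteq> b" "b \<in> orbit p a"
  defines "q \<equiv> p \<circ> transpose a b"
  shows "orbit q a \<inter> orbit q b = {}" "orbit q a \<union> orbit q b = orbit p a"
proof -
  define L where "L = least_power p a"
  define E where "E = (\<lambda>j. (p ^^ j) a)"
  have L: "(p ^^ L) a = a" "L > 0" using least_power_of_permutation[OF perm] by (auto simp: L_def)
  have "distinct (map E [0..<L])" using cycle_of_permutation[OF perm, of a] by (simp add: E_def L_def)
  then have inj: "inj_on E {0..<L}" by (simp add: distinct_map)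
  have orbE: "orbit p a = E ` {0..<L}"
    using orbit_altdef_bounded[OF L(1) L(2)] by (auto simp: E_def)
  obtain m where m: "b = E m" "m < L" using ab(2) orbE by auto
  have E0: "E 0 = a" by (simp add: E_def)
  have m0: "m \<noteq> 0"
  proof
    assume "m = 0" then show False using m ab(1) E0 by simp
  qed
  have Ea: "E j \<noteq> a" if "j < L" "j \<noteq> 0" for j
    using inj_onD[OF inj, of j 0] that E0 L(2) by auto
  have Eb: "E j \<noteq> b" if "j < L" "j \<noteq> m" for j
    using inj_onD[OF inj, of j m] that m by auto
  have ES: "E (Suc j) = p (E j)" for j by (simp add: E_def)
  have qa: "(q ^^ i) a = E (m + i)" if "0 < i" "m + i \<le> L" for i
    using that
  proof (induction i)
    case 0 then show ?case by simp
  next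
    case (Suc i)
    show ?case
    proof (cases "i = 0")
      case True then show ?thesis using m(1) ES by (simp add: q_def)
    next
      case False
      then have IH: "(q ^^ i) a = E (m + i)" using Suc by simp
      have ne: "E (m + i) \<noteq> a" "E (m+i) \<noteq> b" using Ea Eb Suc.prems False by auto
      have "(q ^^ Suc i) a = q ((q ^^ i) a)" by simp
      also have "\<dots> = q (E (m + i))" by (simp only: IH)
      also have "\<dots> = p (E (m + i))" using ne by (simp add: q_def)
      finally show ?thesis by (simp add: ES)
    qed
  qed
  have qb: "(q ^^ i) b = E i" if "0 < i" "i \<le> m" for i
    using that
  proof (induction i)
    case 0 then show ?case by simp
  next
    case (Suc i)
    show ?case
    proof (cases "i = 0")
      case True then show ?thesis using E0 ES by (simp add: q_def)
    next
      case False
      then have IH: "(q ^^ i) b = E i" using Suc by simp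
      have ne: "E i \<noteq> a" "E i \<noteq> b" using Ea Eb Suc.prems False m by auto
      have "(q ^^ Suc i) b = q ((q ^^ i) b)" by simp
      also have "\<dots> = q (E i)" by (simp only: IH)
      also have "\<dots> = p (E i)" using ne by (simp add: q_def)
      finally show ?thesis by (simp add: ES)
    qed
  qed
  have oa: "orbit q a = E ` ({0} \<union> {m<..<L})"
  proof -
    have "(q ^^ (L - m)) a = a" using qa[of "L - m"] m L by (simp add: E_def)
    then have "orbit q a = {(q ^^ j) a | j. j < L - m}"
      using orbit_altdef_bounded[of "L - m" q a] m by simp
    also have "\<dots> = E ` ({0} \<union> {m<..<L})"
    proof (intro set_eqI iffI)
      fix x assume "x \<in> {(q ^^ j) a | j. j < L - m}"
      then obtain j where j: "x = (q ^^ j) a" "j < L - m" by auto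
      show "x \<in> E ` ({0} \<union> {m<..<L})"
      proof (cases "j = 0")
        case True then show ?thesis using j E0 by auto
      next
        case False then show ?thesis using j qa[of j] by (intro image_eqI[of _ _ "m + j"]) auto
      qed
    next
      fix x assume "x \<in> E ` ({0} \<union> {m<..<L})"
      then obtain j where j: "x = E j" "j = 0 \<or> (m < j \<and> j < L)" by auto
      show "x \<in> {(q ^^ j) a | j. j < L - m}"
      proof (cases "j = 0")
        case True then show ?thesis using j E0 m by (auto intro!: exI[of _ 0])
      next
        case False
        then have "x = (q ^^ (j - m)) a" using j qa[of "j - m"] by auto
        then show ?thesis using j False by (auto intro!: exI[of _ "j - m"])
      qed
    qed
    finally show ?thesis .
  qed
  have ob: "orbit q b = E ` {1..m}"
  proof -
    have "(q ^^ m) b = b" using qb[of m] m m0 by simp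
    then have "orbit q b = {(q ^^ j) b | j. j < m}"
      using orbit_altdef_bounded[of m q b] m0 by simp
    also have "\<dots> = E ` {1..m}"
    proof (intro set_eqI iffI)
      fix x assume "x \<in> {(q ^^ j) b | j. j < m}"
      then obtain j where j: "x = (q ^^ j) b" "j < m" by auto
      show "x \<in> E ` {1..m}"
      proof (cases "j = 0")
        case True then show ?thesis using j m m0 by auto
      next
        case False then show ?thesis using j qb[of j] by auto
      qed
    next
      fix x assume "x \<in> E ` {1..m}"
      then obtain j where j: "x = E j" "1 \<le> j" "j \<le> m" by auto
      show "x \<in> {(q ^^ j) b | j. j < m}"
      proof (cases "j = m")
        case True then show ?thesis using j m m0 by (auto intro!: exI[of _ 0])
      next
        case False
        then show ?thesis using j qb[of j] by (auto intro!: exI[of _ j])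
      qed
    qed
    finally show ?thesis .
  qed
  have sub1: "{0} \<union> {m<..<L} \<subseteq> {0..<L}" and sub2: "{1..m} \<subseteq> {0..<L}" using m by auto
  have "orbit q a \<inter> orbit q b = E ` (({0} \<union> {m<..<L}) \<inter> {1..m})"
    unfolding oa ob using inj_on_image_Int[OF inj sub1 sub2] by simp
  also have "({0} \<union> {m<..<L}) \<inter> {1..m} = {}" by auto
  finally show "orbit q a \<inter> orbit q b = {}" by simp
  have "({0} \<union> {m<..<L}) \<union> {1..m} = {0..<L}" using m by auto
  then show "orbit q a \<union> orbit q b = orbit p a" unfolding oa ob orbE by (metis image_Un)
qed

lemma orbit_outside:
  fixes p :: "'a \<Rightarrow> 'a"
  assumes perm: "permutation p" and ab: "b \<in> orbit p a" and x: "x \<notin> orbit p a"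
  shows "orbit (p \<circ> transpose a b) x = orbit p x"
proof -
  define q where "q = p \<circ> transpose a b"
  have permq: "permutation q" unfolding q_def by (intro permutation_compose perm permutation_swap_id)
  have "(q ^^ j) x = (p ^^ j) x" for j
  proof (induction j)
    case 0 then show ?case by simp
  next
    case (Suc j)
    have inx: "(p ^^ j) x \<in> orbit p x" by (rule funpow_in_orbit_perm[OF perm])
    have "(p ^^ j) x \<noteq> a"
    proof
      assume "(p ^^ j) x = a"
      then have "orbit p a = orbit p x" using orbit_eq_of_mem[OF perm] inx by metis
      then show False using x permutation_self_in_orbit[OF perm, of x] by simp
    qed
    moreover have "(p ^^ j) x \<noteq> b"
    proof
      assume "(p ^^ j) x = b"
      then have "orbit p b = orbit p x" using orbit_eq_of_mem[OF perm] inx by metis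
      moreover have "orbit p b = orbit p a" using orbit_eq_of_mem[OF perm ab] .
      ultimately show False using x permutation_self_in_orbit[OF perm, of x] by simp
    qed
    ultimately show ?case using Suc by (simp add: q_def)
  qed
  then show ?thesis unfolding q_def[symmetric]
    by (simp add: orbit_altdef_permutation[OF perm] orbit_altdef_permutation[OF permq])
qed

lemma merge_orbit:
  fixes p :: "'a \<Rightarrow> 'a"
  assumes perm: "permutation p" and ab: "a \<noteq> b" "b \<notin> orbit p a"
  shows "b \<in> orbit (p \<circ> transpose a b) a"
proof -
  define q where "q = p \<circ> transpose a b"
  define L where "L = least_power p b"
  have L: "(p ^^ L) b = b" "L > 0" using least_power_of_permutation[OF perm] by (auto simp: L_def)
  have nb: "(p ^^ i) b \<noteq> b" if "0 < i" "i < L" for i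
    using least_power_le[of i p b] that by (auto simp: L_def)
  have na: "(p ^^ i) b \<noteq> a" for i
  proof
    assume "(p ^^ i) b = a"
    then have "a \<in> orbit p b" using funpow_in_orbit_perm[OF perm] by metis
    then show False using orbit_sym[OF perm] ab(2) by blast
  qed
  have qa: "(q ^^ i) a = (p ^^ i) b" if "0 < i" "i \<le> L" for i
    using that
  proof (induction i)
    case 0 then show ?case by simp
  next
    case (Suc i)
    show ?case
    proof (cases "i = 0")
      case True then show ?thesis by (simp add: q_def)
    next
      case False
      then have IH: "(q ^^ i) a = (p ^^ i) b" using Suc by simp
      have "(q ^^ Suc i) a = q ((q ^^ i) a)" by simp
      also have "\<dots> = q ((p ^^ i) b)" by (simp only: IH)
      also have "\<dots> = p ((p ^^ i) b)" using na[of i] nb[of i] Suc.prems False by (simp add: q_def)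
      finally show ?thesis by simp
    qed
  qed
  have "(q ^^ L) a = b" using qa[of L] L by simp
  then show ?thesis using L(2) unfolding q_def[symmetric] orbit_altdef by blast
qed

lemma finite_cycles: "finite (cycles_of n p)"
  by (simp add: cycles_of_def)

lemma num_cycles_pos:
  assumes "1 \<le> n" shows "num_cycles n p \<ge> 1"
  using assms by (simp add: num_cycles_def cycles_of_def Suc_le_eq card_gt_0_iff)

lemma num_cycles_id: "num_cycles n id = n"
proof -
  have "cycles_of n id = (\<lambda>x. {x}) ` {1..n}" by (auto simp: cycles_of_def)
  moreover have "inj_on (\<lambda>x::nat. {x}) {1..n}" by (auto simp: inj_on_def)
  ultimately show ?thesis by (simp add: num_cycles_def card_image)
qed

lemma num_cycles_split:
  assumes p: "p permutes {1..n}" and a: "a \<in> {1..n}" and b: "b \<in> {1..n}"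
    and ab: "a \<noteq> b" "b \<in> orbit p a"
  shows "num_cycles n (p \<circ> transpose a b) = num_cycles n p + 1"
proof -
  define S where "S = {1..n::nat}"
  define q where "q = p \<circ> transpose a b"
  have perm: "permutation p" using p by (auto simp: permutation_permutes)
  have qS: "q permutes {1..n}" unfolding q_def using p a b by (intro permutes_compose permutes_swap_id)
  have permq: "permutation q" using qS by (auto simp: permutation_permutes)
  define R where "R = cycles_of n p - {orbit p a}"
  have cp: "cycles_of n p = orbit p ` S" using cycles_of_orbit[OF p] by (simp add: S_def)
  have cq: "cycles_of n q = orbit q ` S" using cycles_of_orbit[OF qS] by (simp add: S_def)
  have sp: "orbit q a \<inter> orbit q b = {}" "orbit q a \<union> orbit q b = orbit p a"
    using split_orbits[OF perm ab] by (simp_all add: q_def)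
  have oba: "orbit p b = orbit p a" using orbit_eq_of_mem[OF perm ab(2)] .
  have ne: "orbit q a \<noteq> orbit q b" using sp(1) orbit_nonempty[of q a] by auto
  have naR: "orbit q a \<notin> R"
  proof
    assume "orbit q a \<in> R"
    then obtain x where x: "orbit q a = orbit p x" "orbit p x \<noteq> orbit p a" by (auto simp: R_def cp)
    have "a \<in> orbit p x" using x(1) permutation_self_in_orbit[OF permq, of a] by simp
    then show False using orbit_eq_of_mem[OF perm] x(2) by metis
  qed
  have nbR: "orbit q b \<notin> R"
  proof
    assume "orbit q b \<in> R"
    then obtain x where x: "orbit q b = orbit p x" "orbit p x \<noteq> orbit p a" by (auto simp: R_def cp)
    have "b \<in> orbit p x" using x(1) permutation_self_in_orbit[OF permq, of b] by simp
    then show False using orbit_eq_of_mem[OF perm] x(2) oba by metis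
  qed
  have eq: "cycles_of n q = insert (orbit q a) (insert (orbit q b) R)"
  proof (intro set_eqI iffI)
    fix C assume "C \<in> cycles_of n q"
    then obtain y where y: "y \<in> S" "C = orbit q y" by (auto simp: cq)
    show "C \<in> insert (orbit q a) (insert (orbit q b) R)"
    proof (cases "y \<in> orbit p a")
      case True
      then have "y \<in> orbit q a \<or> y \<in> orbit q b" using sp(2) by auto
      then show ?thesis using y orbit_eq_of_mem[OF permq] by auto
    next
      case False
      then have "C = orbit p y" using y orbit_outside[OF perm ab(2) False] by (simp add: q_def)
      moreover have "orbit p y \<noteq> orbit p a"
        using False permutation_self_in_orbit[OF perm, of y] by auto
      ultimately show ?thesis using y by (auto simp: R_def cp)
    qed
  next
    fix C assume C: "C \<in> insert (orbit q a) (insert (orbit q b) R)"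
    show "C \<in> cycles_of n q"
    proof -
      { assume "C \<in> R"
        then obtain y where y: "y \<in> S" "C = orbit p y" "orbit p y \<noteq> orbit p a" by (auto simp: R_def cp)
        have "y \<notin> orbit p a" using y(3) orbit_eq_of_mem[OF perm] by metis
        then have "C = orbit q y" using y orbit_outside[OF perm ab(2)] by (simp add: q_def)
        then have ?thesis using y by (simp add: cq) }
      then show ?thesis using C a b by (auto simp: cq S_def)
    qed
  qed
  have fR: "finite R" by (simp add: R_def finite_cycles)
  have 1: "num_cycles n q = card R + 2"
    unfolding num_cycles_def eq using fR ne naR nbR by simp
  have ain: "orbit p a \<in> cycles_of n p" using a by (simp add: cp S_def)
  have "card (cycles_of n p) > 0" using finite_cycles[of n p] ain card_gt_0_iff by blast
  then have "num_cycles n p = card R + 1"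
    unfolding num_cycles_def R_def using finite_cycles[of n p] ain
    by (simp add: card_Diff_singleton)
  with 1 show ?thesis by (simp add: q_def)
qed

lemma num_cycles_merge:
  assumes p: "p permutes {1..n}" and a: "a \<in> {1..n}" and b: "b \<in> {1..n}"
    and ab: "a \<noteq> b" "b \<notin> orbit p a"
  shows "num_cycles n p = num_cycles n (p \<circ> transpose a b) + 1"
proof -
  define q where "q = p \<circ> transpose a b"
  have perm: "permutation p" using p by (auto simp: permutation_permutes)
  have qS: "q permutes {1..n}" unfolding q_def using p a b by (intro permutes_compose permutes_swap_id)
  have "b \<in> orbit q a" using merge_orbit[OF perm ab] by (simp add: q_def)
  from num_cycles_split[OF qS a b ab(1) this]
  have "num_cycles n (q \<circ> transpose a b) = num_cycles n q + 1" .
  moreover have "q \<circ> transpose a b = p" by (simp add: q_def comp_assoc)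
  ultimately show ?thesis by (simp add: q_def)
qed



lemma subseq_set: "subseq xs ys \<Longrightarrow> set xs \<subseteq> set ys"
  by (induction rule: list_emb.induct) auto

lemma subseq_delete:
  "subseq xs ys \<Longrightarrow> xs \<noteq> ys \<Longrightarrow> \<exists>A i B. ys = A @ i # B \<and> subseq xs (A @ B)"
proof (induction ys arbitrary: xs)
  case Nil then show ?case by simp
next
  case (Cons y ys)
  show ?case
  proof (cases xs)
    case Nil then show ?thesis by (intro exI[of _ "[]"]) auto
  next
    case (Cons x xs')
    show ?thesis
    proof (cases "x = y")
      case True
      then have "subseq xs' ys" "xs' \<noteq> ys" using Cons.prems Cons by auto
      then obtain A i B where "ys = A @ i # B" "subseq xs' (A @ B)" using Cons.IH by blast
      then show ?thesis using Cons True by (intro exI[of _ "y # A"]) auto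
    next
      case False
      then have "subseq xs ys" using Cons.prems Cons by auto
      then show ?thesis by (intro exI[of _ "[]"]) auto
    qed
  qed
qed

lemma subseq_insert: "subseq (A @ B) (A @ i # B)"
proof -
  have "subseq B (i # B)" by (rule list_emb.list_emb_Cons) (rule list_emb_refl, simp)
  then show ?thesis by (simp add: subseq_append')
qed

lemma star_lower_gen:
  assumes k: "k \<in> {1..n}" and w: "set w \<subseteq> {1..n} - {k}"
  shows "num_cycles n (star_prod k w) + 2 * card (set w) \<le> n + length w"
  using w
proof (induction w rule: rev_induct)
  case Nil then show ?case using num_cycles_id[of n] by (simp add: id_def)
next
  case (snoc i w)
  define p where "p = star_prod k w"
  have IH: "num_cycles n p + 2 * card (set w) \<le> n + length w" using snoc by (simp add: p_def)
  have i: "i \<in> {1..n}" "i \<noteq> k" using snoc.prems by auto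
  have pS: "p permutes {1..n}" unfolding p_def using k snoc.prems by (intro star_prod_permutes) auto
  have perm: "permutation p" using pS by (auto simp: permutation_permutes)
  have eq: "star_prod k (w @ [i]) = p \<circ> transpose k i" by (simp add: star_prod_snoc p_def)
  show ?case
  proof (cases "i \<in> set w")
    case True
    have "num_cycles n (p \<circ> transpose k i) \<le> num_cycles n p + 1"
    proof (cases "i \<in> orbit p k")
      case True then show ?thesis using num_cycles_split[OF pS k i(1)] i by simp
    next
      case False then show ?thesis using num_cycles_merge[OF pS k i(1)] i by simp
    qed
    moreover have "set (w @ [i]) = set w" using True by auto
    ultimately show ?thesis using IH eq by (simp del: comp_apply)
  next
    case False
    have "p i = i" unfolding p_def using False i by (intro star_prod_fix) auto
    then have "orbit p i = {i}" by (simp add: orbit_eq_singleton_iff)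
    then have "i \<notin> orbit p k" using orbit_sym[OF perm, of i k] i by auto
    then have "num_cycles n p = num_cycles n (p \<circ> transpose k i) + 1"
      using num_cycles_merge[OF pS k i(1)] i by simp
    moreover have "card (set (w @ [i])) = card (set w) + 1" using False by simp
    ultimately show ?thesis using IH eq by (simp del: comp_apply)
  qed
qed

lemma star_lower:
  assumes k: "k \<in> {1..n}" and w: "set w = {1..n} - {k}"
  shows "n + num_cycles n (star_prod k w) \<le> length w + 2"
proof -
  have "card (set w) = n - 1" using w k by simp
  then show ?thesis using star_lower_gen[OF k, of w] w k by simp
qed

lemma nk_ge: "k \<in> {1..n} \<Longrightarrow> n + num_cycles n p \<ge> 2"
  using num_cycles_pos[of n p] by auto

lemma insert_letter:
  assumes k: "k \<in> {1..n}" and g: "A @ B \<in> star_facts n k \<sigma>" and i: "i \<in> {1..n} - {k}"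
    and pq: "star_prod k (A @ i # B) = p" and c: "num_cycles n p = num_cycles n \<sigma> + 1"
  shows "A @ i # B \<in> star_facts n k p \<and> subseq (A @ B) (A @ i # B)"
proof -
  have g1: "set (A @ B) = {1..n} - {k}" "length (A @ B) = n + num_cycles n \<sigma> - 2"
    using g unfolding star_facts_def by blast+
  have "set (A @ i # B) = insert i (set (A @ B))" by simp
  also have "\<dots> = {1..n} - {k}" using g1(1) i by blast
  finally have 1: "set (A @ i # B) = {1..n} - {k}" .
  have "length (A @ i # B) = length (A @ B) + 1" by simp
  then have 2: "length (A @ i # B) = n + num_cycles n p - 2"
    using g1(2) c nk_ge[OF k, of \<sigma>] by linarith
  have 3: "subseq (A @ B) (A @ i # B)" by (rule subseq_insert)
  show ?thesis using 1 2 3 pq unfolding star_facts_def by simp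
qed

lemma star_insert:
  assumes k: "k \<in> {1..n}" and g: "\<gamma> \<in> star_facts n k \<sigma>"
    and a: "a \<in> {1..n}" and b: "b \<in> {1..n}" and ab: "a \<noteq> b"
    and c: "num_cycles n (\<sigma> \<circ> transpose a b) = num_cycles n \<sigma> + 1"
  shows "\<exists>\<delta>\<in>star_facts n k (\<sigma> \<circ> transpose a b). subseq \<gamma> \<delta>"
proof -
  have sg: "star_prod k \<gamma> = \<sigma>" "set \<gamma> = {1..n} - {k}" using g by (auto simp: star_facts_def)
  have "\<exists>A B i. \<gamma> = A @ B \<and> i \<in> {1..n} - {k} \<and> star_prod k (A @ i # B) = \<sigma> \<circ> transpose a b"
  proof (cases "a = k")
    case True
    have "star_prod k (\<gamma> @ [b]) = \<sigma> \<circ> transpose a b" using True sg by (simp add: star_prod_snoc)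
    moreover have "b \<in> {1..n} - {k}" using b ab True by blast
    ultimately show ?thesis by (intro exI[of _ \<gamma>] exI[of _ "[]"] exI[of _ b]) simp
  next
    case ak: False
    show ?thesis
    proof (cases "b = k")
      case True
      have "star_prod k (\<gamma> @ [a]) = \<sigma> \<circ> transpose a b" using True sg by (simp add: star_prod_snoc transpose_commute)
      moreover have "a \<in> {1..n} - {k}" using a ab True by blast
      ultimately show ?thesis by (intro exI[of _ \<gamma>] exI[of _ "[]"] exI[of _ a]) simp
    next
      case bk: False
      have "a \<in> set \<gamma>" using sg a ak by auto
      then obtain A B' where AB: "\<gamma> = A @ a # B'" "a \<notin> set B'" using split_list_last[of a \<gamma>] by blast
      have "set (a # B') \<subseteq> set \<gamma>" using AB(1) by auto
      then have sB: "set (a # B') \<subseteq> {1..n}" using sg(2) by blast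
      define P where "P = star_prod k (a # B')"
      have PS: "P permutes {1..n}" unfolding P_def using k sB by (rule star_prod_permutes)
      have bijP: "bij P" using PS permutes_bij by blast
      have Pa: "P a = k" unfolding P_def using AB ak star_prod_fix[of a k B'] by simp
      define i where "i = P b"
      have iS: "i \<in> {1..n}" unfolding i_def using permutes_in_image[OF PS] b by blast
      have ik: "i \<noteq> k" using Pa ab bij_is_inj[OF bijP] unfolding i_def inj_def by auto
      have "transpose k i \<circ> P = P \<circ> transpose (inv P k) (inv P i)"
        by (rule transpose_comp_eq[OF bijP])
      also have "inv P k = a" unfolding Pa[symmetric] by (rule inv_f_f[OF bij_is_inj[OF bijP]])
      also have "inv P i = b" unfolding i_def by (rule inv_f_f[OF bij_is_inj[OF bijP]])
      finally have tr: "transpose k i \<circ> P = P \<circ> transpose a b" .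
      have "star_prod k (A @ i # a # B') = star_prod k A \<circ> (transpose k i \<circ> P)"
        unfolding P_def by (simp only: star_prod_append star_prod_Cons comp_assoc)
      also have "\<dots> = star_prod k A \<circ> (P \<circ> transpose a b)" by (simp only: tr)
      also have "\<dots> = star_prod k (A @ a # B') \<circ> transpose a b"
        unfolding P_def by (simp only: star_prod_append comp_assoc)
      finally have "star_prod k (A @ i # a # B') = \<sigma> \<circ> transpose a b"
        unfolding AB(1)[symmetric] sg(1) .
      moreover have "i \<in> {1..n} - {k}" using iS ik by blast
      ultimately show ?thesis
        apply (rule_tac exI[of _ A], rule_tac exI[of _ "a # B'"], rule_tac exI[of _ i])
        using AB(1) by simp
    qed
  qed
  then obtain A B i where ABi: "\<gamma> = A @ B" "i \<in> {1..n} - {k}" "star_prod k (A @ i # B) = \<sigma> \<circ> transpose a b"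
    by blast
  from insert_letter[OF k _ ABi(2,3) c] g ABi(1) show ?thesis by blast
qed

lemma star_delete:
  assumes k: "k \<in> {1..n}" and d: "\<delta> \<in> star_facts n k \<pi>" and g: "set \<gamma> = {1..n} - {k}"
    and sub: "subseq \<gamma> \<delta>" and ne: "\<gamma> \<noteq> \<delta>"
  shows "\<exists>a b \<delta>'. a \<in> {1..n} \<and> b \<in> {1..n} \<and> a \<noteq> b \<and>
           num_cycles n \<pi> = num_cycles n (\<pi> \<circ> transpose a b) + 1 \<and>
           \<delta>' \<in> star_facts n k (\<pi> \<circ> transpose a b) \<and> subseq \<gamma> \<delta>' \<and> subseq \<delta>' \<delta>"
proof -
  have sd: "star_prod k \<delta> = \<pi>" "set \<delta> = {1..n} - {k}" "length \<delta> = n + num_cycles n \<pi> - 2"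
    using d by (auto simp: star_facts_def)
  obtain A i B where AiB: "\<delta> = A @ i # B" "subseq \<gamma> (A @ B)" using subseq_delete[OF sub ne] by blast
  have "set (A @ B) \<subseteq> set \<delta>" using AiB(1) by auto
  then have setAB: "set (A @ B) = {1..n} - {k}"
    using subseq_set[OF AiB(2)] g sd(2) by blast
  have "i \<in> set \<delta>" "set B \<subseteq> set \<delta>" using AiB(1) by auto
  then have i: "i \<in> {1..n} - {k}" and sB: "set B \<subseteq> {1..n}" using sd(2) by blast+
  define P where "P = star_prod k B"
  have PS: "P permutes {1..n}" unfolding P_def using k sB by (rule star_prod_permutes)
  have bijP: "bij P" using PS permutes_bij by blast
  define a where "a = inv P k"
  define b where "b = inv P i"
  have iPS: "inv P permutes {1..n}" using PS by (rule permutes_inv)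
  have a: "a \<in> {1..n}" unfolding a_def using permutes_in_image[OF iPS] k by blast
  have b: "b \<in> {1..n}" unfolding b_def using permutes_in_image[OF iPS] i by blast
  have ab: "a \<noteq> b" using i bij_is_inj[OF bij_imp_bij_inv[OF bijP]] unfolding a_def b_def inj_def by auto
  have tr: "transpose k i \<circ> P = P \<circ> transpose a b"
    unfolding a_def b_def by (rule transpose_comp_eq[OF bijP])
  define \<rho> where "\<rho> = star_prod k (A @ B)"
  have \<rho>S: "\<rho> permutes {1..n}" unfolding \<rho>_def using k setAB by (intro star_prod_permutes) auto
  have "star_prod k \<delta> = star_prod k A \<circ> (transpose k i \<circ> P)"
    unfolding AiB(1) P_def by (simp only: star_prod_append star_prod_Cons comp_assoc)
  also have "\<dots> = star_prod k A \<circ> (P \<circ> transpose a b)" by (simp only: tr)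
  also have "\<dots> = \<rho> \<circ> transpose a b"
    unfolding \<rho>_def P_def by (simp only: star_prod_append comp_assoc)
  finally have pi: "\<pi> = \<rho> \<circ> transpose a b" unfolding sd(1) .
  have rho: "\<rho> = \<pi> \<circ> transpose a b" unfolding pi by (simp only: comp_assoc transpose_comp_involutory comp_id)
  have low: "n + num_cycles n \<rho> \<le> length (A @ B) + 2" unfolding \<rho>_def by (rule star_lower[OF k setAB])
  have lenAB: "length (A @ B) + 1 = length \<delta>" using AiB(1) by simp
  have cyc: "num_cycles n \<pi> = num_cycles n \<rho> + 1"
  proof (cases "b \<in> orbit \<rho> a")
    case True show ?thesis unfolding pi by (rule num_cycles_split[OF \<rho>S a b ab True])
  next
    case False
    have "num_cycles n \<rho> = num_cycles n \<pi> + 1" unfolding pi by (rule num_cycles_merge[OF \<rho>S a b ab False])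
    then have False using low lenAB sd(3) nk_ge[OF k, of \<pi>] by arith
    then show ?thesis ..
  qed
  have "A @ B \<in> star_facts n k \<rho>"
    using setAB lenAB sd(3) cyc unfolding star_facts_def \<rho>_def by simp
  then have 1: "A @ B \<in> star_facts n k (\<pi> \<circ> transpose a b)" by (simp only: rho)
  have 2: "num_cycles n \<pi> = num_cycles n (\<pi> \<circ> transpose a b) + 1" using cyc by (simp only: rho)
  have 3: "subseq (A @ B) \<delta>" unfolding AiB(1) by (rule subseq_insert)
  show ?thesis
    apply (rule exI[of _ a], rule exI[of _ b], rule exI[of _ "A @ B"])
    using a b ab 1 2 3 AiB(2) by simp
qed



lemma single_cycle_fact:
  assumes k: "k \<in> {1..n}" and p: "p permutes {1..n}" and c1: "num_cycles n p = 1"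
  shows "\<exists>w. w \<in> star_facts n k p"
proof -
  define S where "S = {1..n::nat}"
  have perm: "permutation p" using p by (auto simp: permutation_permutes)
  have cp: "cycles_of n p = orbit p ` S" using cycles_of_orbit[OF p] by (simp add: S_def)
  obtain C where C: "cycles_of n p = {C}" using c1 unfolding num_cycles_def by (rule card_1_singletonE)
  have oe: "orbit p x = orbit p k" if "x \<in> S" for x
  proof -
    have "orbit p x \<in> cycles_of n p" "orbit p k \<in> cycles_of n p"
      unfolding cp using that k by (auto simp: S_def)
    then show ?thesis using C by blast
  qed
  have O: "orbit p k = S"
  proof
    show "orbit p k \<subseteq> S" using orbit_subset_S[OF p k] by (simp add: S_def)
    show "S \<subseteq> orbit p k" using oe permutation_self_in_orbit[OF perm] by blast
  qed
  define L where "L = least_power p k"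
  define E where "E = (\<lambda>j. (p ^^ j) k)"
  have L: "(p ^^ L) k = k" "L > 0" using least_power_of_permutation[OF perm] by (auto simp: L_def)
  have "distinct (map E [0..<L])" using cycle_of_permutation[OF perm, of k] by (simp add: E_def L_def)
  then have inj: "inj_on E {0..<L}" by (simp add: distinct_map)
  have orbE: "orbit p k = E ` {0..<L}"
    using orbit_altdef_bounded[OF L(1) L(2)] by (auto simp: E_def)
  have E0: "E 0 = k" by (simp add: E_def)
  have ES: "p (E j) = E (Suc j)" for j by (simp add: E_def)
  have EL: "E L = k" using L by (simp add: E_def)
  have injE: "i = j" if "E i = E j" "i < L" "j < L" for i j
    using inj_onD[OF inj that(1)] that by auto
  have nL: "n = L"
  proof -
    have "card S = card (E ` {0..<L})" using O orbE by simp
    also have "\<dots> = L" using card_image[OF inj] by simp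
    finally show ?thesis by (simp add: S_def)
  qed
  define c where "c = (\<lambda>m x. if x \<in> E ` {..<m} then p x else if x = E m then k else x)"
  have step: "star_prod k (rev (map E [1..<Suc m])) = c m" if "m < L" for m
    using that
  proof (induction m)
    case 0
    show ?case by (rule ext) (simp add: c_def E0)
  next
    case (Suc m)
    have IH: "star_prod k (rev (map E [1..<Suc m])) = c m" using Suc by simp
    have w: "rev (map E [1..<Suc (Suc m)]) = E (Suc m) # rev (map E [1..<Suc m])" by simp
    have pt: "transpose k (E (Suc m)) (c m x) = c (Suc m) x" for x
    proof (cases "x \<in> E ` {..<m}")
      case True
      then obtain j where j: "x = E j" "j < m" by auto
      have 1: "E (Suc j) \<noteq> k" using injE[of "Suc j" 0] E0 j Suc.prems by auto
      have 2: "E (Suc j) \<noteq> E (Suc m)" using injE[of "Suc j" "Suc m"] j Suc.prems by auto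
      have "c m x = E (Suc j)" using True j ES by (simp add: c_def)
      moreover have "c (Suc m) x = E (Suc j)" using True j ES by (simp add: c_def)
      ultimately show ?thesis using 1 2 by simp
    next
      case nin: False
      show ?thesis
      proof (cases "x = E m")
        case True
        have "c m x = k" using nin True by (simp add: c_def)
        moreover have "c (Suc m) x = E (Suc m)" using True ES by (simp add: c_def)
        ultimately show ?thesis by simp
      next
        case False
        then have nin2: "x \<notin> E ` {..<Suc m}" using nin by (auto simp: less_Suc_eq)
        have cm: "c m x = x" using nin False by (simp add: c_def)
        show ?thesis
        proof (cases "x = E (Suc m)")
          case True
          then show ?thesis using cm nin2 by (simp add: c_def)
        next
          case False
          have "x \<noteq> k" using nin2 E0 by auto
          then show ?thesis using cm nin2 False by (simp add: c_def)
        qed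
      qed
    qed
    show ?case unfolding w star_prod_Cons IH by (rule ext) (simp add: pt)
  qed
  define w where "w = rev (map E [1..<L])"
  have L1: "Suc (L - 1) = L" using L by simp
  have sw: "star_prod k w = c (L - 1)" using step[of "L - 1"] L1 L by (simp add: w_def)
  have cp: "c (L - 1) = p"
  proof
    fix x
    show "c (L - 1) x = p x"
    proof (cases "x \<in> E ` {..<L - 1}")
      case True then show ?thesis by (simp add: c_def)
    next
      case nin: False
      show ?thesis
      proof (cases "x = E (L - 1)")
        case True
        then have "p x = E L" using ES[of "L - 1"] L1 by simp
        then show ?thesis using True nin EL by (simp add: c_def)
      next
        case neq: False
        have "x \<notin> E ` {0..<L}"
        proof
          assume "x \<in> E ` {0..<L}"
          then obtain j where j: "x = E j" "j < L" by auto
          show False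
          proof (cases "j < L - 1")
            case True then show False using nin j by auto
          next
            case False then have "j = L - 1" using j by simp
            then show False using neq j by simp
          qed
        qed
        then have "x \<notin> {1..n}" using O orbE by (simp add: S_def)
        then have "p x = x" using p by (simp add: permutes_not_in)
        then show ?thesis using nin neq by (simp add: c_def)
      qed
    qed
  qed
  have setw: "set w = {1..n} - {k}"
  proof -
    have "set w = E ` {1..<L}" by (simp add: w_def)
    also have "\<dots> = E ` ({0..<L} - {0})" by (rule arg_cong[where f="image E"]) auto
    also have "\<dots> = E ` {0..<L} - E ` {0}" using inj L(2) by (intro inj_on_image_set_diff) auto
    also have "\<dots> = {1..n} - {k}" using O orbE E0 by (simp add: S_def)
    finally show ?thesis .
  qed
  have "length w = n + num_cycles n p - 2" using nL c1 by (simp add: w_def)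
  then have "w \<in> star_facts n k p" using sw cp setw by (simp add: star_facts_def)
  then show ?thesis by blast
qed



lemma star_exists:
  assumes k: "k \<in> {1..n}" and p: "p permutes {1..n}"
  shows "\<exists>w. w \<in> star_facts n k p"
proof -
  have "\<forall>p. p permutes {1..n} \<and> num_cycles n p = c \<longrightarrow> (\<exists>w. w \<in> star_facts n k p)" for c
  proof (induction c)
    case 0
    show ?case
    proof (intro allI impI)
      fix p assume "p permutes {1..n} \<and> num_cycles n p = 0"
      moreover have "num_cycles n p \<ge> 1" using num_cycles_pos[of n p] k by simp
      ultimately show "\<exists>w. w \<in> star_facts n k p" by simp
    qed
  next
    case (Suc c)
    show ?case
    proof (intro allI impI)
      fix p assume pc: "p permutes {1..n} \<and> num_cycles n p = Suc c"
      then have p: "p permutes {1..n}" and c: "num_cycles n p = Suc c" by auto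
      have perm: "permutation p" using p by (auto simp: permutation_permutes)
      show "\<exists>w. w \<in> star_facts n k p"
      proof (cases "c = 0")
        case True then show ?thesis using single_cycle_fact[OF k p] c by simp
      next
        case False
        have kin: "orbit p k \<in> cycles_of n p" using k by (simp add: cycles_of_orbit[OF p])
        have "card (cycles_of n p - {orbit p k}) = c"
          using c kin finite_cycles[of n p] by (simp add: num_cycles_def)
        then have "cycles_of n p - {orbit p k} \<noteq> {}" using False by (metis card.empty)
        then obtain C where C: "C \<in> cycles_of n p" "C \<noteq> orbit p k" by blast
        then obtain x where x0: "x \<in> {1..n}" "C = orbit p x" unfolding cycles_of_orbit[OF p] by blast
        then have x: "x \<in> {1..n}" "orbit p x \<noteq> orbit p k" using C by auto
        have xk: "x \<notin> orbit p k" using x(2) orbit_eq_of_mem[OF perm] by metis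
        have kx: "k \<noteq> x" using x(2) by auto
        define \<sigma> where "\<sigma> = p \<circ> transpose k x"
        have \<sigma>S: "\<sigma> permutes {1..n}" unfolding \<sigma>_def using p k x(1)
          by (intro permutes_compose permutes_swap_id)
        have m: "num_cycles n p = num_cycles n \<sigma> + 1"
          unfolding \<sigma>_def by (rule num_cycles_merge[OF p k x(1) kx xk])
        then obtain \<gamma> where g: "\<gamma> \<in> star_facts n k \<sigma>" using Suc.IH \<sigma>S c by auto
        have bk: "\<sigma> \<circ> transpose k x = p"
          unfolding \<sigma>_def by (simp only: comp_assoc transpose_comp_involutory comp_id)
        have "num_cycles n (\<sigma> \<circ> transpose k x) = num_cycles n \<sigma> + 1" using m bk by simp
        from star_insert[OF k g k x(1) kx this] show ?thesis unfolding bk by blast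
      qed
    qed
  qed
  then show ?thesis using p by blast
qed

lemma star_facts_prod: "w \<in> star_facts n k p \<Longrightarrow> star_prod k w = p"
  by (simp add: star_facts_def)

lemma star_le_less:
  assumes k: "k \<in> {1..n}" and le: "star_le n k \<sigma> \<rho>" and ne: "\<sigma> \<noteq> \<rho>"
  shows "num_cycles n \<sigma> < num_cycles n \<rho>"
proof -
  obtain \<gamma> \<delta> where g: "\<gamma> \<in> star_facts n k \<sigma>" and d: "\<delta> \<in> star_facts n k \<rho>" and s: "subseq \<gamma> \<delta>"
    using le unfolding star_le_def by blast
  have "\<gamma> \<noteq> \<delta>" using star_facts_prod[OF g] star_facts_prod[OF d] ne by auto
  then have "length \<gamma> \<noteq> length \<delta>" using subseq_same_length[OF s] by auto
  then have "length \<gamma> < length \<delta>" using list_emb_length[OF s] by simp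
  then show ?thesis using g d nk_ge[OF k, of \<sigma>] nk_ge[OF k, of \<rho>] by (simp add: star_facts_def)
qed

lemma star_facts_permutes:
  assumes k: "k \<in> {1..n}" and "w \<in> star_facts n k p" shows "p permutes {1..n}"
proof -
  have "star_prod k w = p" "set w \<subseteq> {1..n}" using assms(2) by (auto simp: star_facts_def)
  with star_prod_permutes[OF k, of w] show ?thesis by simp
qed

lemma covers_below:
  assumes k: "k \<in> {1..n}" and \<pi>: "\<pi> permutes {1..n}"
  shows "star_covers n k \<sigma> \<pi> \<longleftrightarrow>
    (\<exists>a b. a \<in> {1..n} \<and> b \<in> {1..n} \<and> a < b \<and> b \<notin> orbit \<pi> a \<and> \<sigma> = \<pi> \<circ> transpose a b)"
proof
  assume cov: "star_covers n k \<sigma> \<pi>"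
  then have le: "star_le n k \<sigma> \<pi>" and ne: "\<sigma> \<noteq> \<pi>"
    and noint: "\<And>\<rho>. \<rho> permutes {1..n} \<Longrightarrow> \<rho> \<notin> {\<sigma>, \<pi>} \<Longrightarrow> star_le n k \<sigma> \<rho> \<Longrightarrow> star_le n k \<rho> \<pi> \<Longrightarrow> False"
    unfolding star_covers_def by blast+
  obtain \<gamma> \<delta> where g: "\<gamma> \<in> star_facts n k \<sigma>" and d: "\<delta> \<in> star_facts n k \<pi>" and s: "subseq \<gamma> \<delta>"
    using le unfolding star_le_def by blast
  have gd: "\<gamma> \<noteq> \<delta>" using star_facts_prod[OF g] star_facts_prod[OF d] ne by auto
  have sg: "set \<gamma> = {1..n} - {k}" using g by (simp add: star_facts_def)
  obtain a b \<delta>' where ab: "a \<in> {1..n}" "b \<in> {1..n}" "a \<noteq> b"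
    and cyc: "num_cycles n \<pi> = num_cycles n (\<pi> \<circ> transpose a b) + 1"
    and d': "\<delta>' \<in> star_facts n k (\<pi> \<circ> transpose a b)" and s1: "subseq \<gamma> \<delta>'" and s2: "subseq \<delta>' \<delta>"
    using star_delete[OF k d sg s gd] by blast
  define \<rho> where "\<rho> = \<pi> \<circ> transpose a b"
  have \<rho>S: "\<rho> permutes {1..n}" unfolding \<rho>_def using \<pi> ab by (intro permutes_compose permutes_swap_id)
  have l1: "star_le n k \<sigma> \<rho>" unfolding star_le_def \<rho>_def using g d' s1 by blast
  have l2: "star_le n k \<rho> \<pi>" unfolding star_le_def \<rho>_def using d' d s2 by blast
  have "\<rho> \<noteq> \<pi>" using cyc by (auto simp: \<rho>_def)
  then have eq: "\<sigma> = \<rho>" using noint[OF \<rho>S _ l1 l2] by blast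
  have nob: "b \<notin> orbit \<pi> a"
  proof
    assume "b \<in> orbit \<pi> a"
    from num_cycles_split[OF \<pi> ab(1,2,3) this] cyc show False by simp
  qed
  have perm: "permutation \<pi>" using \<pi> by (auto simp: permutation_permutes)
  show "\<exists>a b. a \<in> {1..n} \<and> b \<in> {1..n} \<and> a < b \<and> b \<notin> orbit \<pi> a \<and> \<sigma> = \<pi> \<circ> transpose a b"
  proof (cases "a < b")
    case True then show ?thesis using ab nob eq unfolding \<rho>_def by blast
  next
    case False
    then have "b < a" using ab(3) by simp
    moreover have "a \<notin> orbit \<pi> b" using nob orbit_sym[OF perm] by blast
    ultimately show ?thesis using ab eq unfolding \<rho>_def transpose_commute[of a b] by blast
  qed
next
  assume "\<exists>a b. a \<in> {1..n} \<and> b \<in> {1..n} \<and> a < b \<and> b \<notin> orbit \<pi> a \<and> \<sigma> = \<pi> \<circ> transpose a b"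
  then obtain a b where a: "a \<in> {1..n}" and b: "b \<in> {1..n}" and ab: "a < b" and nob: "b \<notin> orbit \<pi> a"
    and \<sigma>: "\<sigma> = \<pi> \<circ> transpose a b" by blast
  have ab': "a \<noteq> b" using ab by simp
  have \<sigma>S: "\<sigma> permutes {1..n}" unfolding \<sigma> using \<pi> a b by (intro permutes_compose permutes_swap_id)
  have cyc: "num_cycles n \<pi> = num_cycles n \<sigma> + 1" unfolding \<sigma> by (rule num_cycles_merge[OF \<pi> a b ab' nob])
  have bk: "\<sigma> \<circ> transpose a b = \<pi>"
    unfolding \<sigma> by (simp only: comp_assoc transpose_comp_involutory comp_id)
  obtain \<gamma> where g: "\<gamma> \<in> star_facts n k \<sigma>" using star_exists[OF k \<sigma>S] by blast
  have "num_cycles n (\<sigma> \<circ> transpose a b) = num_cycles n \<sigma> + 1" using cyc bk by simp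
  from star_insert[OF k g a b ab' this] have le: "star_le n k \<sigma> \<pi>"
    unfolding bk star_le_def using g by blast
  have ne: "\<sigma> \<noteq> \<pi>" using cyc by auto
  have noint: "\<not> (\<exists>\<rho>. \<rho> permutes {1..n} \<and> \<rho> \<notin> {\<sigma>, \<pi>} \<and> star_le n k \<sigma> \<rho> \<and> star_le n k \<rho> \<pi>)"
  proof
    assume "\<exists>\<rho>. \<rho> permutes {1..n} \<and> \<rho> \<notin> {\<sigma>, \<pi>} \<and> star_le n k \<sigma> \<rho> \<and> star_le n k \<rho> \<pi>"
    then obtain \<rho> where "\<rho> \<notin> {\<sigma>, \<pi>}" "star_le n k \<sigma> \<rho>" "star_le n k \<rho> \<pi>" by blast
    then have "num_cycles n \<sigma> < num_cycles n \<rho>" "num_cycles n \<rho> < num_cycles n \<pi>"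
      using star_le_less[OF k] by auto
    then show False using cyc by simp
  qed
  show "star_covers n k \<sigma> \<pi>" unfolding star_covers_def using \<sigma>S \<pi> le ne noint by blast
qed

lemma covers_above:
  assumes k: "k \<in> {1..n}" and \<pi>: "\<pi> permutes {1..n}"
  shows "star_covers n k \<pi> \<tau> \<longleftrightarrow>
    (\<exists>a b. a \<in> {1..n} \<and> b \<in> {1..n} \<and> a < b \<and> b \<in> orbit \<pi> a \<and> \<tau> = \<pi> \<circ> transpose a b)"
proof
  assume cov: "star_covers n k \<pi> \<tau>"
  then have le: "star_le n k \<pi> \<tau>" and ne: "\<pi> \<noteq> \<tau>" and \<tau>S: "\<tau> permutes {1..n}"
    and noint: "\<And>\<rho>. \<rho> permutes {1..n} \<Longrightarrow> \<rho> \<notin> {\<pi>, \<tau>} \<Longrightarrow> star_le n k \<pi> \<rho> \<Longrightarrow> star_le n k \<rho> \<tau> \<Longrightarrow> False"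
    unfolding star_covers_def by blast+
  obtain \<gamma> \<delta> where g: "\<gamma> \<in> star_facts n k \<pi>" and d: "\<delta> \<in> star_facts n k \<tau>" and s: "subseq \<gamma> \<delta>"
    using le unfolding star_le_def by blast
  have gd: "\<gamma> \<noteq> \<delta>" using star_facts_prod[OF g] star_facts_prod[OF d] ne by auto
  have sg: "set \<gamma> = {1..n} - {k}" using g by (simp add: star_facts_def)
  obtain a b \<delta>' where ab: "a \<in> {1..n}" "b \<in> {1..n}" "a \<noteq> b"
    and cyc: "num_cycles n \<tau> = num_cycles n (\<tau> \<circ> transpose a b) + 1"
    and d': "\<delta>' \<in> star_facts n k (\<tau> \<circ> transpose a b)" and s1: "subseq \<gamma> \<delta>'" and s2: "subseq \<delta>' \<delta>"
    using star_delete[OF k d sg s gd] by blast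
  define \<rho> where "\<rho> = \<tau> \<circ> transpose a b"
  have \<rho>S: "\<rho> permutes {1..n}" unfolding \<rho>_def using \<tau>S ab by (intro permutes_compose permutes_swap_id)
  have l1: "star_le n k \<pi> \<rho>" unfolding star_le_def \<rho>_def using g d' s1 by blast
  have l2: "star_le n k \<rho> \<tau>" unfolding star_le_def \<rho>_def using d' d s2 by blast
  have "\<rho> \<noteq> \<tau>" using cyc by (auto simp: \<rho>_def)
  then have eq: "\<pi> = \<rho>" using noint[OF \<rho>S _ l1 l2] by blast
  have \<tau>eq: "\<tau> = \<pi> \<circ> transpose a b"
    unfolding eq \<rho>_def by (simp only: comp_assoc transpose_comp_involutory comp_id)
  have cyc': "num_cycles n \<tau> = num_cycles n \<pi> + 1" using cyc eq by (simp add: \<rho>_def)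
  have inb: "b \<in> orbit \<pi> a"
  proof (rule ccontr)
    assume "b \<notin> orbit \<pi> a"
    from num_cycles_merge[OF \<pi> ab(1,2,3) this] cyc' \<tau>eq show False by simp
  qed
  have perm: "permutation \<pi>" using \<pi> by (auto simp: permutation_permutes)
  show "\<exists>a b. a \<in> {1..n} \<and> b \<in> {1..n} \<and> a < b \<and> b \<in> orbit \<pi> a \<and> \<tau> = \<pi> \<circ> transpose a b"
  proof (cases "a < b")
    case True then show ?thesis using ab inb \<tau>eq by blast
  next
    case False
    then have "b < a" using ab(3) by simp
    moreover have "a \<in> orbit \<pi> b" using inb orbit_sym[OF perm] by blast
    ultimately show ?thesis using ab \<tau>eq unfolding transpose_commute[of a b] by blast
  qed
next
  assume "\<exists>a b. a \<in> {1..n} \<and> b \<in> {1..n} \<and> a < b \<and> b \<in> orbit \<pi> a \<and> \<tau> = \<pi> \<circ> transpose a b"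
  then obtain a b where a: "a \<in> {1..n}" and b: "b \<in> {1..n}" and ab: "a < b" and inb: "b \<in> orbit \<pi> a"
    and \<tau>: "\<tau> = \<pi> \<circ> transpose a b" by blast
  have ab': "a \<noteq> b" using ab by simp
  have \<tau>S: "\<tau> permutes {1..n}" unfolding \<tau> using \<pi> a b by (intro permutes_compose permutes_swap_id)
  have cyc: "num_cycles n \<tau> = num_cycles n \<pi> + 1" unfolding \<tau> by (rule num_cycles_split[OF \<pi> a b ab' inb])
  obtain \<gamma> where g: "\<gamma> \<in> star_facts n k \<pi>" using star_exists[OF k \<pi>] by blast
  have "num_cycles n (\<pi> \<circ> transpose a b) = num_cycles n \<pi> + 1" using cyc \<tau> by simp
  from star_insert[OF k g a b ab' this] have le: "star_le n k \<pi> \<tau>"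
    unfolding \<tau> star_le_def using g by blast
  have ne: "\<pi> \<noteq> \<tau>" using cyc by auto
  have noint: "\<not> (\<exists>\<rho>. \<rho> permutes {1..n} \<and> \<rho> \<notin> {\<pi>, \<tau>} \<and> star_le n k \<pi> \<rho> \<and> star_le n k \<rho> \<tau>)"
  proof
    assume "\<exists>\<rho>. \<rho> permutes {1..n} \<and> \<rho> \<notin> {\<pi>, \<tau>} \<and> star_le n k \<pi> \<rho> \<and> star_le n k \<rho> \<tau>"
    then obtain \<rho> where "\<rho> \<notin> {\<pi>, \<tau>}" "star_le n k \<pi> \<rho>" "star_le n k \<rho> \<tau>" by blast
    then have "num_cycles n \<pi> < num_cycles n \<rho>" "num_cycles n \<rho> < num_cycles n \<tau>"
      using star_le_less[OF k] by auto
    then show False using cyc by simp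
  qed
  show "star_covers n k \<pi> \<tau>" unfolding star_covers_def using \<tau>S \<pi> le ne noint by blast
qed



lemma choose2_add: "(a + b) choose 2 = (a choose 2) + (b choose 2) + a * (b::nat)"
proof (induction b)
  case 0 then show ?case by simp
next
  case (Suc b)
  have "((a + Suc b) choose 2) = (a + b) + ((a + b) choose 2)"
    by (simp add: numeral_2_eq_2)
  moreover have "(Suc b choose 2) = b + (b choose 2)" by (simp add: numeral_2_eq_2)
  ultimately show ?case using Suc by (simp add: algebra_simps)
qed

lemma pair_sum_identity:
  "(\<Sum>j<length ls. \<Sum>i<j. ls ! i * ls ! j) + (\<Sum>i<length ls. ls ! i choose 2) = sum_list ls choose 2"
proof (induction ls rule: rev_induct)
  case Nil then show ?case by simp
next
  case (snoc x ls)
  have 1: "(\<Sum>j<length (ls @ [x]). \<Sum>i<j. (ls @ [x]) ! i * (ls @ [x]) ! j)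
      = (\<Sum>j<length ls. \<Sum>i<j. ls ! i * ls ! j) + (\<Sum>i<length ls. ls ! i * x)"
    by (simp add: nth_append)
  have 2: "(\<Sum>i<length ls. ls ! i * x) = sum_list ls * x"
    by (simp add: sum_list_sum_nth atLeast0LessThan sum_distrib_right)
  have 3: "(\<Sum>i<length (ls @ [x]). (ls @ [x]) ! i choose 2) = (\<Sum>i<length ls. ls ! i choose 2) + (x choose 2)"
    by (simp add: nth_append)
  show ?case unfolding 1 2 3 using snoc choose2_add[of "sum_list ls" x] by simp
qed

definition pairs :: "nat set \<Rightarrow> (nat \<times> nat) set" where
  "pairs A = {(a, b). a \<in> A \<and> b \<in> A \<and> a < b}"

lemma card_pairs:
  assumes "finite A" shows "card (pairs A) = card A choose 2"
proof -
  have "bij_betw (\<lambda>(a, b). {a, b}) (pairs A) {B. B \<subseteq> A \<and> card B = 2}"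
  proof (rule bij_betw_imageI)
    show "inj_on (\<lambda>(a, b). {a, b}) (pairs A)"
      by (auto simp: inj_on_def pairs_def doubleton_eq_iff)
    show "(\<lambda>(a, b). {a, b}) ` pairs A = {B. B \<subseteq> A \<and> card B = 2}"
    proof (intro set_eqI iffI)
      fix B assume "B \<in> (\<lambda>(a, b). {a, b}) ` pairs A"
      then show "B \<in> {B. B \<subseteq> A \<and> card B = 2}" by (auto simp: pairs_def)
    next
      fix B assume "B \<in> {B. B \<subseteq> A \<and> card B = 2}"
      then obtain x y where xy: "B = {x, y}" "x \<noteq> y" "B \<subseteq> A" by (auto simp: card_2_iff)
      show "B \<in> (\<lambda>(a, b). {a, b}) ` pairs A"
      proof (cases "x < y")
        case True then show ?thesis using xy by (intro image_eqI[of _ _ "(x, y)"]) (auto simp: pairs_def)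
      next
        case False then have "y < x" using xy by simp
        then show ?thesis using xy by (intro image_eqI[of _ _ "(y, x)"]) (auto simp: pairs_def)
      qed
    qed
  qed
  then have "card (pairs A) = card {B. B \<subseteq> A \<and> card B = 2}" by (rule bij_betw_same_card)
  also have "\<dots> = card A choose 2" using n_subsets[OF assms] .
  finally show ?thesis .
qed

lemma finite_pairs: "finite A \<Longrightarrow> finite (pairs A)"
  by (rule finite_subset[of _ "A \<times> A"]) (auto simp: pairs_def)

lemma transpose_inj_pairs:
  assumes "transpose a b = transpose c d" "(a::nat) < b" "c < d" shows "a = c \<and> b = d"
proof -
  have "transpose c d a = b" using assms(1) by (metis transpose_apply_first)
  then show ?thesis using assms(2,3) by (auto simp: transpose_eq_iff)
qed

lemma sum_over_cycles:
  assumes "mset ls = image_mset card (mset_set (cycles_of n \<pi>))"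
  shows "(\<Sum>i<length ls. f (ls ! i)) = (\<Sum>C\<in>cycles_of n \<pi>. f (card C))"
proof -
  have "(\<Sum>i<length ls. f (ls ! i)) = sum_list (map f ls)"
    by (simp add: sum_list_sum_nth atLeast0LessThan)
  also have "\<dots> = sum_mset (image_mset f (mset ls))" by (simp flip: sum_mset_sum_list)
  also have "\<dots> = sum_mset (image_mset (\<lambda>C. f (card C)) (mset_set (cycles_of n \<pi>)))"
    using assms by (simp add: multiset.map_comp comp_def)
  also have "\<dots> = (\<Sum>C\<in>cycles_of n \<pi>. f (card C))" by (simp add: sum_unfold_sum_mset)
  finally show ?thesis .
qed

theorem mainTheorem13:
  fixes n k :: nat and \<pi> :: "nat \<Rightarrow> nat" and ls :: "nat list"
  assumes "\<pi> permutes {1..n}"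
    and "k \<in> {1..n}"
    and "mset ls = image_mset card (mset_set (cycles_of n \<pi>))"
  shows "card {\<sigma>. star_covers n k \<sigma> \<pi>} = (\<Sum>j<length ls. \<Sum>i<j. ls ! i * ls ! j)
       \<and> card {\<tau>. star_covers n k \<pi> \<tau>} = (\<Sum>i<length ls. ls ! i choose 2)"
proof -
  note \<pi> = assms(1) and k = assms(2) and ls = assms(3)
  define S where "S = {1..n::nat}"
  have perm: "permutation \<pi>" using \<pi> by (auto simp: permutation_permutes)
  define f where "f = (\<lambda>(a, b). \<pi> \<circ> transpose a b)"
  define SP where "SP = {(a, b). a \<in> S \<and> b \<in> S \<and> a < b \<and> b \<in> orbit \<pi> a}"
  define DP where "DP = {(a, b). a \<in> S \<and> b \<in> S \<and> a < b \<and> b \<notin> orbit \<pi> a}"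
  have below: "{\<sigma>. star_covers n k \<sigma> \<pi>} = f ` DP"
    using covers_below[OF k \<pi>] by (auto simp: f_def DP_def S_def)
  have above: "{\<tau>. star_covers n k \<pi> \<tau>} = f ` SP"
    using covers_above[OF k \<pi>] by (auto simp: f_def SP_def S_def)
  have injf: "inj_on f (pairs S)"
  proof (rule inj_onI)
    fix x y assume x: "x \<in> pairs S" and y: "y \<in> pairs S" and e: "f x = f y"
    obtain a b where ab: "x = (a, b)" "a < b" using x by (auto simp: pairs_def)
    obtain c d where cd: "y = (c, d)" "c < d" using y by (auto simp: pairs_def)
    have "\<pi> \<circ> transpose a b = \<pi> \<circ> transpose c d" using e ab cd by (simp add: f_def)
    then have "inv \<pi> \<circ> (\<pi> \<circ> transpose a b) = inv \<pi> \<circ> (\<pi> \<circ> transpose c d)" by simp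
    then have "transpose a b = transpose c d"
      using permutes_inv_o(2)[OF \<pi>] by (simp add: comp_assoc[symmetric])
    then show "x = y" using transpose_inj_pairs[OF _ ab(2) cd(2)] ab cd by simp
  qed
  have SPp: "SP \<subseteq> pairs S" and DPp: "DP \<subseteq> pairs S" by (auto simp: SP_def DP_def pairs_def)
  have DPeq: "DP = pairs S - SP" by (auto simp: SP_def DP_def pairs_def)
  have fS: "finite S" by (simp add: S_def)
  have cyc: "cycles_of n \<pi> = orbit \<pi> ` S" using cycles_of_orbit[OF \<pi>] by (simp add: S_def)
  have csub: "C \<subseteq> S" if C: "C \<in> cycles_of n \<pi>" for C
  proof -
    obtain x where x: "x \<in> S" "C = orbit \<pi> x" using C by (auto simp: cyc)
    show ?thesis using orbit_subset_S[OF \<pi>, of x] x by (simp add: S_def)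
  qed
  have cdisj: "C = C'" if H: "C \<in> cycles_of n \<pi>" "C' \<in> cycles_of n \<pi>" "x \<in> C" "x \<in> C'" for C C' x
  proof -
    obtain y y' where "C = orbit \<pi> y" "C' = orbit \<pi> y'" using H(1,2) by (auto simp: cyc)
    then show ?thesis using H(3,4) orbit_eq_of_mem[OF perm] by metis
  qed
  have SPU: "SP = (\<Union>C\<in>cycles_of n \<pi>. pairs C)"
  proof (intro set_eqI iffI)
    fix x assume "x \<in> SP"
    then obtain a b where ab: "x = (a, b)" "a \<in> S" "b \<in> S" "a < b" "b \<in> orbit \<pi> a" by (auto simp: SP_def)
    have "orbit \<pi> a \<in> cycles_of n \<pi>" using ab by (simp add: cyc)
    moreover have "a \<in> orbit \<pi> a" using permutation_self_in_orbit[OF perm] .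
    ultimately show "x \<in> (\<Union>C\<in>cycles_of n \<pi>. pairs C)" using ab by (auto simp: pairs_def)
  next
    fix x assume "x \<in> (\<Union>C\<in>cycles_of n \<pi>. pairs C)"
    then obtain C a b where C: "C \<in> cycles_of n \<pi>" "x = (a, b)" "a \<in> C" "b \<in> C" "a < b"
      by (auto simp: pairs_def)
    obtain y where y: "C = orbit \<pi> y" using C(1) by (auto simp: cyc)
    have "orbit \<pi> a = C" using y C(3) orbit_eq_of_mem[OF perm] by metis
    then show "x \<in> SP" using C csub[OF C(1)] by (auto simp: SP_def)
  qed
  have cardSP: "card SP = (\<Sum>C\<in>cycles_of n \<pi>. card C choose 2)"
  proof -
    have "card SP = (\<Sum>C\<in>cycles_of n \<pi>. card (pairs C))"
      unfolding SPU
    proof (rule card_UN_disjoint)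
      show "finite (cycles_of n \<pi>)" by (rule finite_cycles)
      show "\<forall>C\<in>cycles_of n \<pi>. finite (pairs C)"
        using csub fS by (auto intro: finite_pairs finite_subset)
      show "\<forall>C\<in>cycles_of n \<pi>. \<forall>C'\<in>cycles_of n \<pi>. C \<noteq> C' \<longrightarrow> pairs C \<inter> pairs C' = {}"
        using cdisj by (fastforce simp: pairs_def)
    qed
    also have "\<dots> = (\<Sum>C\<in>cycles_of n \<pi>. card C choose 2)"
      using csub fS by (intro sum.cong refl card_pairs) (auto intro: finite_subset)
    finally show ?thesis .
  qed
  have sumn: "sum_list ls = n"
  proof -
    have "sum_list ls = (\<Sum>i<length ls. ls ! i)" by (simp add: sum_list_sum_nth atLeast0LessThan)
    also have "\<dots> = (\<Sum>C\<in>cycles_of n \<pi>. card C)" using sum_over_cycles[OF ls, of "\<lambda>x. x"] by simp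
    also have "\<dots> = card (\<Union>(cycles_of n \<pi>))"
    proof (rule card_Union_disjoint[symmetric])
      show "pairwise disjnt (cycles_of n \<pi>)"
        using cdisj by (auto simp: pairwise_def disjnt_def)
      show "\<And>C. C \<in> cycles_of n \<pi> \<Longrightarrow> finite C" using csub fS by (auto intro: finite_subset)
    qed
    also have "\<Union>(cycles_of n \<pi>) = S"
    proof
      show "\<Union>(cycles_of n \<pi>) \<subseteq> S" using csub by blast
      show "S \<subseteq> \<Union>(cycles_of n \<pi>)" using permutation_self_in_orbit[OF perm] by (auto simp: cyc)
    qed
    finally show ?thesis by (simp add: S_def)
  qed
  have c2: "(\<Sum>i<length ls. ls ! i choose 2) = card SP"
    using sum_over_cycles[OF ls, of "\<lambda>x. x choose 2"] cardSP by simp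
  have "card {\<tau>. star_covers n k \<pi> \<tau>} = card SP"
    unfolding above using card_image[OF inj_on_subset[OF injf SPp]] .
  moreover have "card {\<sigma>. star_covers n k \<sigma> \<pi>} = card DP"
    unfolding below using card_image[OF inj_on_subset[OF injf DPp]] .
  moreover have "card DP = card (pairs S) - card SP"
    unfolding DPeq using SPp finite_pairs[OF fS] by (simp add: card_Diff_subset finite_subset)
  moreover have "card (pairs S) = n choose 2" using card_pairs[OF fS] by (simp add: S_def)
  ultimately show ?thesis using pair_sum_identity[of ls] sumn c2 by simp
qed

end
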